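(* $\mathsf{Gap_{tot}P}=\mathsf{GapP}$.
   Context: An NPTM is a non-deterministic polynomial-time Turing machine. For an NPTM $M$ and input $x$, $acc_M(x)$ and $rej_M(x)$ denote the numbers of accepting and rejecting computation paths of $M$ on $x$, and $tot_M(x)$ denotes the number of all computation paths of $M$ on $x$ minus $1$. $\mathsf{TotP}=\{tot_M\mid M \text{ an NPTM}\}$, $\mathsf{GapP}=\{acc_M-rej_M\mid M\text{ an NPTM}\}$ (functions $\Sigma^*\to\mathbb{Z}$). $\mathsf{Gap_{tot}P}$ is the class of functions $f$ that are the difference $f=g-h$ of two functions $g,h\in\mathsf{TotP}$. *)

theory Defs
  imports Main
begin

text \<open>Tape symbols are naturals; 0 is the blank,
  1 encodes input bit False, 2 encodes input bit True.
  A transition (q, a, q', b, m) means: in state q reading a, go to state q',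
  write b, move head by m.\<close>

datatype move = MLeft | MStay | MRight

type_synonym trans = "nat \<times> nat \<times> nat \<times> nat \<times> move"

record nptm =
  delta :: "trans set"
  start_st :: nat
  accept_st :: nat
  reject_st :: nat

type_synonym config = "nat \<times> (int \<Rightarrow> nat) \<times> int"

fun move_off :: "move \<Rightarrow> int" where
  "move_off MLeft = -1" | "move_off MStay = 0" | "move_off MRight = 1"

definition init_config :: "nptm \<Rightarrow> bool list \<Rightarrow> config" where
  "init_config M x = (start_st M,
     (\<lambda>i. if 0 \<le> i \<and> nat i < length x then (if x ! nat i then 2 else 1) else 0), 0)"

definition applicable :: "nptm \<Rightarrow> trans \<Rightarrow> config \<Rightarrow> bool" where
  "applicable M t c = (case t of (q, a, q', b, m) \<Rightarrow> case c of (p, tp, h) \<Rightarrow>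
      t \<in> delta M \<and> p = q \<and> tp h = a \<and> p \<noteq> accept_st M \<and> p \<noteq> reject_st M)"

definition apply_trans :: "trans \<Rightarrow> config \<Rightarrow> config" where
  "apply_trans t c = (case t of (q, a, q', b, m) \<Rightarrow> case c of (p, tp, h) \<Rightarrow>
      (q', tp(h := b), h + move_off m))"

fun valid_seq :: "nptm \<Rightarrow> config \<Rightarrow> trans list \<Rightarrow> bool" where
  "valid_seq M c [] = True"
| "valid_seq M c (t # ts) = (applicable M t c \<and> valid_seq M (apply_trans t c) ts)"

fun exec :: "config \<Rightarrow> trans list \<Rightarrow> config" where
  "exec c [] = c"
| "exec c (t # ts) = exec (apply_trans t c) ts"

definition halted :: "nptm \<Rightarrow> config \<Rightarrow> bool" where
  "halted M c = (\<not> (\<exists>t. applicable M t c))"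

text \<open>A computation path is a maximal sequence of nondeterministic choices
  (transitions) from the initial configuration.\<close>
definition paths :: "nptm \<Rightarrow> bool list \<Rightarrow> trans list set" where
  "paths M x = {ts. valid_seq M (init_config M x) ts \<and> halted M (exec (init_config M x) ts)}"

definition acc :: "nptm \<Rightarrow> bool list \<Rightarrow> nat" where
  "acc M x = card {ts \<in> paths M x. fst (exec (init_config M x) ts) = accept_st M}"

definition rej :: "nptm \<Rightarrow> bool list \<Rightarrow> nat" where
  "rej M x = card {ts \<in> paths M x. fst (exec (init_config M x) ts) \<noteq> accept_st M}"

definition tot :: "nptm \<Rightarrow> bool list \<Rightarrow> nat" where
  "tot M x = card (paths M x) - 1"

definition poly_time :: "nptm \<Rightarrow> bool" where
  "poly_time M = (\<exists>k::nat. \<forall>x ts. valid_seq M (init_config M x) ts \<longrightarrow>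
       length ts \<le> k * length x ^ k + k)"

definition is_NPTM :: "nptm \<Rightarrow> bool" where
  "is_NPTM M = (finite (delta M) \<and> accept_st M \<noteq> reject_st M \<and> poly_time M)"

definition TotP :: "(bool list \<Rightarrow> nat) set" where
  "TotP = {tot M | M. is_NPTM M}"

definition GapP :: "(bool list \<Rightarrow> int) set" where
  "GapP = {(\<lambda>x. int (acc M x) - int (rej M x)) | M. is_NPTM M}"

definition Gap_totP :: "(bool list \<Rightarrow> int) set" where
  "Gap_totP = {(\<lambda>x. int (g x) - int (h x)) | g h. g \<in> TotP \<and> h \<in> TotP}"

end

theory Submission
  imports Defs
begin

definition Pc :: "nptm \<Rightarrow> config \<Rightarrow> trans list set" where
  "Pc M c = {ts. valid_seq M c ts \<and> halted M (exec c ts)}"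

definition SP :: "nptm \<Rightarrow> config \<Rightarrow> (config \<Rightarrow> nat) \<Rightarrow> nat" where
  "SP M c f = (\<Sum>ts\<in>Pc M c. f (exec c ts))"

definition bnd :: "nptm \<Rightarrow> config \<Rightarrow> nat \<Rightarrow> bool" where
  "bnd M c n = (\<forall>ts. valid_seq M c ts \<longrightarrow> length ts \<le> n)"

definition app :: "nptm \<Rightarrow> config \<Rightarrow> trans set" where
  "app M c = {t. applicable M t c}"

lemma applicable_simp:
  "applicable M (q,a,q',b,m) (p,tp,h) \<longleftrightarrow> (q,a,q',b,m) \<in> delta M \<and> p = q \<and> tp h = a \<and> p \<noteq> accept_st M \<and> p \<noteq> reject_st M"
  by (simp add: applicable_def)

lemma apply_simp: "apply_trans (q,a,q',b,m) (p,tp,h) = (q', tp(h:=b), h + move_off m)"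
  by (simp add: apply_trans_def)

lemma app_sub: "app M c \<subseteq> delta M"
  by (auto simp: app_def applicable_def split: prod.splits)

lemma finite_app: "finite (delta M) \<Longrightarrow> finite (app M c)"
  using app_sub finite_subset by blast

lemma applicable_delta: "applicable M t c \<Longrightarrow> t \<in> delta M"
  using app_sub unfolding app_def by blast

lemma valid_set: "valid_seq M c ts \<Longrightarrow> set ts \<subseteq> delta M"
proof (induction ts arbitrary: c)
  case Nil show ?case by simp
next
  case (Cons t ts) then show ?case using applicable_delta by (metis insert_subset list.simps(15) valid_seq.simps(2))
qed

lemma valid_halted: "halted M c \<Longrightarrow> valid_seq M c ts \<Longrightarrow> ts = []"
  by (cases ts) (auto simp: halted_def)

lemma Pc_halted: "halted M c \<Longrightarrow> Pc M c = {[]}"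
proof -
  assume h: "halted M c"
  { fix ts assume "valid_seq M c ts" then have "ts = []" using h by (cases ts) (auto simp: halted_def) }
  then show ?thesis using h by (auto simp: Pc_def)
qed

lemma Pc_nonhalted: "\<not> halted M c \<Longrightarrow> Pc M c = (\<Union>t\<in>app M c. (#) t ` Pc M (apply_trans t c))"
  apply (rule set_eqI)
  subgoal for ts by (cases ts) (auto simp: Pc_def app_def simp del: split_paired_Ex split_paired_All)
  done

lemma finite_Pc: "finite (delta M) \<Longrightarrow> bnd M c n \<Longrightarrow> finite (Pc M c)"
proof -
  assume f: "finite (delta M)" and b: "bnd M c n"
  have "Pc M c \<subseteq> {ts. set ts \<subseteq> delta M \<and> length ts \<le> n}"
    using b valid_set unfolding Pc_def bnd_def by blast
  moreover have "finite {ts. set ts \<subseteq> delta M \<and> length ts \<le> n}"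
    using finite_lists_length_le[OF f] by simp
  ultimately show ?thesis using finite_subset by blast
qed

lemma bnd_step: "bnd M c n \<Longrightarrow> applicable M t c \<Longrightarrow> n \<ge> 1 \<and> bnd M (apply_trans t c) (n - 1)"
proof -
  assume b: "bnd M c n" and a: "applicable M t c"
  have "valid_seq M c [t]" using a by simp
  then have "length [t] \<le> n" using b unfolding bnd_def by blast
  moreover have "bnd M (apply_trans t c) (n - 1)" unfolding bnd_def
  proof (intro allI impI)
    fix ts assume "valid_seq M (apply_trans t c) ts"
    then have "valid_seq M c (t # ts)" using a by simp
    then have "length (t#ts) \<le> n" using b unfolding bnd_def by blast
    then show "length ts \<le> n - 1" by simp
  qed
  ultimately show ?thesis by simp
qed

lemma SP_halted: "halted M c \<Longrightarrow> SP M c f = f c"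
  by (simp add: SP_def Pc_halted)

lemma SP_rec: assumes "finite (delta M)" "bnd M c n" "\<not> halted M c"
  shows "SP M c f = (\<Sum>t\<in>app M c. SP M (apply_trans t c) f)"
proof -
  have fin: "\<And>t. t \<in> app M c \<Longrightarrow> finite (Pc M (apply_trans t c))"
    using bnd_step assms finite_Pc by (metis app_def mem_Collect_eq)
  have "SP M c f = (\<Sum>ts\<in>(\<Union>t\<in>app M c. (#) t ` Pc M (apply_trans t c)). f (exec c ts))"
    unfolding SP_def using Pc_nonhalted[OF assms(3)] by simp
  also have "\<dots> = (\<Sum>t\<in>app M c. \<Sum>ts\<in>(#) t ` Pc M (apply_trans t c). f (exec c ts))"
    by (rule sum.UNION_disjoint) (auto simp: finite_app assms fin)
  also have "\<dots> = (\<Sum>t\<in>app M c. SP M (apply_trans t c) f)"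
    unfolding SP_def by (auto intro!: sum.cong simp: sum.reindex)
  finally show ?thesis .
qed

lemma Pc_nonempty: "bnd M c n \<Longrightarrow> Pc M c \<noteq> {}"
proof (induction n arbitrary: c)
  case 0
  then have "halted M c" using bnd_step unfolding halted_def by fastforce
  then show ?case by (simp add: Pc_halted)
next
  case (Suc n)
  show ?case
  proof (cases "halted M c")
    case True then show ?thesis by (simp add: Pc_halted)
  next
    case False
    then obtain t where t: "applicable M t c" by (auto simp: halted_def)
    then have "bnd M (apply_trans t c) n" using bnd_step Suc.prems by fastforce
    then have "Pc M (apply_trans t c) \<noteq> {}" by (rule Suc.IH)
    then show ?thesis using Pc_nonhalted[OF False] t by (auto simp: app_def simp del: split_paired_Ex split_paired_All)
  qed
qed


definition QM :: "nptm \<Rightarrow> nat set" where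
  "QM M = {start_st M, accept_st M, reject_st M} \<union> fst ` delta M \<union> (\<lambda>t. fst (snd (snd t))) ` delta M"
definition SM :: "nptm \<Rightarrow> nat set" where
  "SM M = {0,1,2} \<union> (\<lambda>t. fst (snd (snd (snd t)))) ` delta M"
definition Inv :: "nptm \<Rightarrow> nat set \<Rightarrow> config \<Rightarrow> bool" where
  "Inv M S c = (fst c \<in> QM M \<and> (\<forall>i. fst (snd c) i \<in> S))"
definition tau :: "nat \<Rightarrow> trans \<Rightarrow> trans" where
  "tau r t = (case t of (q,a,q',b,m) \<Rightarrow> (3*q+r,a,3*q'+r,b,m))"
definition emb :: "nat \<Rightarrow> config \<Rightarrow> config" where
  "emb r c = (case c of (q,tp,h) \<Rightarrow> (3*q+r,tp,h))"
definition simT :: "nptm \<Rightarrow> nat \<Rightarrow> trans set" where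
  "simT M r = tau r ` {t\<in>delta M. fst t \<noteq> accept_st M \<and> fst t \<noteq> reject_st M}"
definition HP :: "nptm \<Rightarrow> nat set \<Rightarrow> (nat \<times> nat) set" where
  "HP M S = {(q,a). q \<in> QM M \<and> a \<in> S \<and> (q = accept_st M \<or> q = reject_st M \<or> (\<forall>q' b m. (q,a,q',b,m) \<notin> delta M))}"
definition Tq :: "nptm \<Rightarrow> nat set \<Rightarrow> nat set \<Rightarrow> nat \<Rightarrow> nat set" where
  "Tq M T1 T2 q = (if q = accept_st M then T1 else T2)"
definition mkf :: "nat \<Rightarrow> nat \<times> nat \<Rightarrow> nat \<Rightarrow> trans" where
  "mkf r qa p = (3 * fst qa + r, snd qa, p, snd qa, MStay)"
definition finT :: "nptm \<Rightarrow> nat set \<Rightarrow> nat \<Rightarrow> nat set \<Rightarrow> nat set \<Rightarrow> trans set" where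
  "finT M S r T1 T2 = (\<lambda>x. mkf r (fst x) (snd x)) ` (SIGMA qa:HP M S. Tq M T1 T2 (fst qa))"

lemma Inv_step:
  assumes "SM M \<subseteq> S" "Inv M S c" "applicable M t c"
  shows "Inv M S (apply_trans t c)"
proof -
  obtain q a q' b m where t: "t = (q,a,q',b,m)" by (cases t) auto
  obtain p tp h where c: "c = (p,tp,h)" by (cases c) auto
  have d: "(q,a,q',b,m) \<in> delta M" using assms(3) t c by (simp add: applicable_simp)
  have "q' \<in> (\<lambda>t. fst (snd (snd t))) ` delta M" using d by (rule rev_image_eqI) simp
  then have "q' \<in> QM M" unfolding QM_def by blast
  moreover have "b \<in> (\<lambda>t. fst (snd (snd (snd t)))) ` delta M" using d by (rule rev_image_eqI) simp
  then have "b \<in> S" using assms(1) unfolding SM_def by blast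
  ultimately show ?thesis using assms(2) unfolding t c apply_simp Inv_def by auto
qed

lemma Inv_exec: "SM M \<subseteq> S \<Longrightarrow> Inv M S c \<Longrightarrow> valid_seq M c ts \<Longrightarrow> Inv M S (exec c ts)"
  by (induction ts arbitrary: c) (auto simp: Inv_step)

lemma tau_apply: "apply_trans (tau r t) (emb r c) = emb r (apply_trans t c)"
  by (cases t; cases c) (auto simp: tau_def emb_def apply_simp)

lemma inj_tau: "inj (tau r)"
  unfolding inj_def tau_def by auto

lemma mod3: "r = 1 \<or> r = 2 \<Longrightarrow> (3 * q + r) mod 3 = (r::nat)"
  by auto

locale part =
  fixes M' M :: nptm and S :: "nat set" and r :: nat and T1 T2 :: "nat set" and X :: "trans set"
  assumes dM': "delta M' = X \<union> simT M r \<union> finT M S r T1 T2"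
  and X: "\<And>t. t \<in> X \<Longrightarrow> fst t mod 3 \<noteq> r"
  and r: "r = 1 \<or> r = 2"
  and facc: "accept_st M' mod 3 \<noteq> r" and frej: "reject_st M' mod 3 \<noteq> r"
  and T: "T1 \<union> T2 \<subseteq> {accept_st M', reject_st M'}" "T1 \<noteq> {}" "T2 \<noteq> {}"
  and S: "SM M \<subseteq> S"
  and fin: "finite (delta M)" "finite (delta M')"
begin

lemma app_nonhalt:
  assumes "Inv M S c" "\<not> halted M c"
  shows "app M' (emb r c) = tau r ` app M c"
proof -
  obtain q tp h where c: "c = (q,tp,h)" by (cases c) auto
  from assms(2) obtain t1 where "applicable M t1 c" by (auto simp: halted_def)
  then obtain q1 b1 m1 where t1: "(q,tp h,q1,b1,m1) \<in> delta M" "q \<noteq> accept_st M" "q \<noteq> reject_st M"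
    unfolding c by (cases t1) (auto simp: applicable_simp)
  have e: "emb r c = (3*q+r,tp,h)" by (simp add: c emb_def)
  have nf: "3*q+r \<noteq> accept_st M'" "3*q+r \<noteq> reject_st M'" using facc frej mod3[OF r] by metis+
  show ?thesis
  proof (rule set_eqI, rule iffI)
    fix t assume "t \<in> app M' (emb r c)"
    then have at: "applicable M' t (3*q+r,tp,h)" by (simp add: app_def e)
    obtain q0 a q' b m where t: "t = (q0,a,q',b,m)" by (cases t) auto
    have td: "t \<in> delta M'" and q0: "q0 = 3*q+r" and a: "a = tp h" using at by (auto simp: t applicable_simp)
    have "t \<notin> X" using X[of t] mod3[OF r] by (auto simp: t q0)
    moreover have "t \<notin> finT M S r T1 T2"
    proof
      assume "t \<in> finT M S r T1 T2"
      then obtain q2 a2 p where "(q2,a2) \<in> HP M S" "t = mkf r (q2,a2) p" unfolding finT_def by auto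
      then show False using t1 by (auto simp: HP_def mkf_def t q0 a)
    qed
    ultimately have "t \<in> simT M r" using td dM' by auto
    then obtain t0 where t0: "t0 \<in> delta M" "fst t0 \<noteq> accept_st M" "fst t0 \<noteq> reject_st M" "t = tau r t0"
      unfolding simT_def by auto
    obtain q3 a3 q3' b3 m3 where t0e: "t0 = (q3,a3,q3',b3,m3)" by (cases t0) auto
    have "applicable M t0 c" using t0 t q0 a by (auto simp: t0e c applicable_simp tau_def)
    then show "t \<in> tau r ` app M c" using t0 by (auto simp: app_def)
  next
    fix t assume "t \<in> tau r ` app M c"
    then obtain t0 where t0: "applicable M t0 c" "t = tau r t0" by (auto simp: app_def)
    obtain q3 a3 q3' b3 m3 where t0e: "t0 = (q3,a3,q3',b3,m3)" by (cases t0) auto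
    have "t \<in> simT M r" using t0 by (auto simp: simT_def t0e c applicable_simp)
    then have "t \<in> delta M'" using dM' by auto
    then show "t \<in> app M' (emb r c)" using t0 nf by (auto simp: app_def emb_def t0e c applicable_simp tau_def)
  qed
qed

lemma nf: "3*q+r \<noteq> accept_st M'" "3*q+r \<noteq> reject_st M'"
  using facc frej mod3[OF r] by metis+

lemma app_halt:
  assumes "Inv M S (q,tp,h)" "halted M (q,tp,h)"
  shows "app M' (emb r (q,tp,h)) = mkf r (q, tp h) ` Tq M T1 T2 q"
proof -
  have e: "emb r (q,tp,h) = (3*q+r,tp,h)" by (simp add: emb_def)
  have hp: "(q, tp h) \<in> HP M S"
  proof -
    have "q \<in> QM M" "tp h \<in> S" using assms(1) by (auto simp: Inv_def)
    moreover have "q = accept_st M \<or> q = reject_st M \<or> (\<forall>q' b m. (q,tp h,q',b,m) \<notin> delta M)"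
    proof (rule ccontr)
      assume "\<not> ?thesis"
      then obtain q' b m where "(q,tp h,q',b,m) \<in> delta M" "q \<noteq> accept_st M" "q \<noteq> reject_st M" by blast
      then have "applicable M (q,tp h,q',b,m) (q,tp,h)" by (simp add: applicable_simp)
      then show False using assms(2) unfolding halted_def by blast
    qed
    ultimately show ?thesis by (simp add: HP_def)
  qed
  show ?thesis
  proof (rule set_eqI, rule iffI)
    fix t assume "t \<in> app M' (emb r (q,tp,h))"
    then have at: "applicable M' t (3*q+r,tp,h)" by (simp add: app_def e)
    obtain q0 a q' b m where t: "t = (q0,a,q',b,m)" by (cases t) auto
    have td: "t \<in> delta M'" and q0: "q0 = 3*q+r" and a: "a = tp h" using at by (auto simp: t applicable_simp)
    have "t \<notin> X" using X[of t] mod3[OF r] by (auto simp: t q0)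
    moreover have "t \<notin> simT M r"
    proof
      assume "t \<in> simT M r"
      then obtain t0 where t0: "t0 \<in> delta M" "fst t0 \<noteq> accept_st M" "fst t0 \<noteq> reject_st M" "t = tau r t0"
        unfolding simT_def by auto
      obtain q3 a3 q3' b3 m3 where t0e: "t0 = (q3,a3,q3',b3,m3)" by (cases t0) auto
      have "applicable M t0 (q,tp,h)" using t0 t q0 a by (auto simp: t0e applicable_simp tau_def)
      then show False using assms(2) unfolding halted_def by blast
    qed
    ultimately have "t \<in> finT M S r T1 T2" using td dM' by auto
    then obtain q2 a2 p where "(q2,a2) \<in> HP M S" "p \<in> Tq M T1 T2 q2" "t = mkf r (q2,a2) p" unfolding finT_def by auto
    then show "t \<in> mkf r (q, tp h) ` Tq M T1 T2 q" using t q0 a by (auto simp: mkf_def)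
  next
    fix t assume "t \<in> mkf r (q, tp h) ` Tq M T1 T2 q"
    then obtain p where p: "p \<in> Tq M T1 T2 q" "t = mkf r (q, tp h) p" by auto
    have "t \<in> finT M S r T1 T2" unfolding finT_def using hp p by (auto intro!: image_eqI[of _ _ "((q, tp h), p)"])
    then have "t \<in> delta M'" using dM' by auto
    then show "t \<in> app M' (emb r (q,tp,h))" using p nf by (auto simp: app_def e mkf_def applicable_simp)
  qed
qed

lemma halted_final: "q = accept_st M' \<or> q = reject_st M' \<Longrightarrow> halted M' (q,tp,h)"
  unfolding halted_def applicable_def by (auto split: prod.splits)

lemma succ_halt:
  assumes "Inv M S (q,tp,h)" "halted M (q,tp,h)" "t \<in> app M' (emb r (q,tp,h))"
  shows "halted M' (apply_trans t (emb r (q,tp,h)))"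
proof -
  obtain p where p: "p \<in> Tq M T1 T2 q" "t = mkf r (q, tp h) p" using app_halt[OF assms(1,2)] assms(3) by auto
  have "p \<in> T1 \<union> T2" using p by (auto simp: Tq_def split: if_splits)
  then have "p = accept_st M' \<or> p = reject_st M'" using T(1) by auto
  then show ?thesis using p by (simp add: mkf_def emb_def apply_simp halted_final)
qed

lemma bnd_sim:
  assumes "Inv M S c" "bnd M c n"
  shows "bnd M' (emb r c) (Suc n)"
proof -
  have "length ts \<le> Suc n" if "Inv M S c" "bnd M c n" "valid_seq M' (emb r c) ts" for c n ts
    using that
  proof (induction ts arbitrary: c n)
    case Nil then show ?case by simp
  next
    case (Cons t ts)
    obtain q tp h where c: "c = (q,tp,h)" by (cases c) auto
    have at: "t \<in> app M' (emb r c)" and vs: "valid_seq M' (apply_trans t (emb r c)) ts"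
      using Cons.prems(3) unfolding valid_seq.simps app_def mem_Collect_eq by blast+
    show ?case
    proof (cases "halted M c")
      case True
      then have "halted M' (apply_trans t (emb r (q,tp,h)))" using succ_halt[of q tp h t] Cons.prems(1) at unfolding c by blast
      then have "halted M' (apply_trans t (emb r c))" unfolding c .
      then have "ts = []" using vs valid_halted by blast
      then show ?thesis by simp
    next
      case False
      then have "t \<in> tau r ` app M c" using app_nonhalt[OF Cons.prems(1)] at by blast
      then obtain t0 where t0: "applicable M t0 c" "t = tau r t0" unfolding app_def by blast
      have i: "Inv M S (apply_trans t0 c)" using Inv_step[OF S Cons.prems(1) t0(1)] .
      have b: "bnd M (apply_trans t0 c) (n - 1)" "n \<ge> 1" using bnd_step[OF Cons.prems(2) t0(1)] by auto
      have v: "valid_seq M' (emb r (apply_trans t0 c)) ts" using vs t0(2) by (simp add: tau_apply)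
      have "length ts \<le> Suc (n - 1)" by (rule Cons.IH[OF i b(1) v])
      then show ?thesis using \<open>n \<ge> 1\<close> by simp
    qed
  qed
  note h = this
  show ?thesis unfolding bnd_def
  proof (intro allI impI)
    fix ts assume "valid_seq M' (emb r c) ts"
    then show "length ts \<le> Suc n" using h[OF assms] by simp
  qed
qed

lemma SP_sim:
  assumes "Inv M S c" "bnd M c n"
  shows "SP M' (emb r c) f = SP M c (\<lambda>d. SP M' (emb r d) f)"
  using assms
proof (induction n arbitrary: c)
  case 0
  then have "halted M c" using bnd_step unfolding halted_def by fastforce
  then show ?case by (simp add: SP_halted)
next
  case (Suc n)
  show ?case
  proof (cases "halted M c")
    case True then show ?thesis by (simp add: SP_halted)
  next
    case False
    have IH: "\<And>t. t \<in> app M c \<Longrightarrow> SP M (apply_trans t c) (\<lambda>d. SP M' (emb r d) f) = SP M' (emb r (apply_trans t c)) f"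
    proof -
      fix t assume "t \<in> app M c"
      then have a: "applicable M t c" by (simp add: app_def)
      have "Inv M S (apply_trans t c)" using Inv_step[OF S Suc.prems(1) a] .
      moreover have "bnd M (apply_trans t c) n" using bnd_step[OF Suc.prems(2) a] by simp
      ultimately show "SP M (apply_trans t c) (\<lambda>d. SP M' (emb r d) f) = SP M' (emb r (apply_trans t c)) f"
        using Suc.IH by simp
    qed
    have an: "app M' (emb r c) = tau r ` app M c" using app_nonhalt[OF Suc.prems(1) False] .
    have "app M c \<noteq> {}" using False by (auto simp: halted_def app_def)
    then have nh: "\<not> halted M' (emb r c)" using an unfolding halted_def app_def by blast
    have "SP M c (\<lambda>d. SP M' (emb r d) f) = (\<Sum>t\<in>app M c. SP M (apply_trans t c) (\<lambda>d. SP M' (emb r d) f))"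
      using SP_rec[OF fin(1) Suc.prems(2) False] .
    also have "\<dots> = (\<Sum>t\<in>app M c. SP M' (apply_trans (tau r t) (emb r c)) f)"
      by (rule sum.cong[OF refl]) (simp add: IH tau_apply)
    also have "\<dots> = (\<Sum>t\<in>app M' (emb r c). SP M' (apply_trans t (emb r c)) f)"
    proof -
      have ij: "inj_on (tau r) (app M c)" by (rule inj_on_subset[OF inj_tau subset_UNIV])
      show ?thesis
        unfolding an using sum.reindex[OF ij, where g="\<lambda>t. SP M' (apply_trans t (emb r c)) f"]
        by (simp add: o_def)
    qed
    also have "\<dots> = SP M' (emb r c) f"
      using SP_rec[OF fin(2) bnd_sim[OF Suc.prems] nh] by simp
    finally show ?thesis by (rule sym)
  qed
qed

lemma SP_halt:
  assumes "Inv M S c" "halted M c"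
  shows "SP M' (emb r c) f = (\<Sum>p\<in>Tq M T1 T2 (fst c). f (p, snd c))"
proof -
  obtain q tp h where c: "c = (q,tp,h)" by (cases c) auto
  have an: "app M' (emb r c) = mkf r (q, tp h) ` Tq M T1 T2 q" using app_halt assms c by simp
  have "Tq M T1 T2 q \<noteq> {}" using T by (simp add: Tq_def)
  then have nh: "\<not> halted M' (emb r c)" using an unfolding halted_def app_def by blast
  have b0: "bnd M c 0" using assms(2) unfolding bnd_def halted_def by (metis le_zero_eq list.size(3) neq_Nil_conv valid_seq.simps(2))
  have "SP M' (emb r c) f = (\<Sum>t\<in>app M' (emb r c). SP M' (apply_trans t (emb r c)) f)"
    using SP_rec[OF fin(2) bnd_sim[OF assms(1) b0] nh] .
  also have "\<dots> = (\<Sum>t\<in>app M' (emb r c). f (apply_trans t (emb r c)))"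
    using succ_halt assms unfolding c by (auto intro!: sum.cong simp: SP_halted)
  also have "\<dots> = (\<Sum>p\<in>Tq M T1 T2 q. f (apply_trans (mkf r (q, tp h) p) (emb r c)))"
    unfolding an by (rule sum.reindex_cong[where l="mkf r (q, tp h)"]) (auto simp: inj_on_def mkf_def)
  also have "\<dots> = (\<Sum>p\<in>Tq M T1 T2 q. f (p, tp, h))"
    by (simp add: mkf_def c emb_def apply_simp)
  finally show ?thesis by (simp add: c)
qed

lemma SP_main:
  assumes "Inv M S c" "bnd M c n"
  shows "SP M' (emb r c) f = SP M c (\<lambda>d. \<Sum>p\<in>Tq M T1 T2 (fst d). f (p, snd d))"
proof -
  have "SP M' (emb r c) f = SP M c (\<lambda>d. SP M' (emb r d) f)" using SP_sim[OF assms] .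
  also have "\<dots> = SP M c (\<lambda>d. \<Sum>p\<in>Tq M T1 T2 (fst d). f (p, snd d))"
  proof -
    have "SP M' (emb r (exec c ts)) f = (\<Sum>p\<in>Tq M T1 T2 (fst (exec c ts)). f (p, snd (exec c ts)))"
      if "ts \<in> Pc M c" for ts
    proof -
      have "Inv M S (exec c ts)" "halted M (exec c ts)" using that Inv_exec[OF S assms(1)] unfolding Pc_def by auto
      then show ?thesis by (rule SP_halt)
    qed
    then show ?thesis unfolding SP_def[of M c] by (rule sum.cong[OF refl])
  qed
  finally show ?thesis .
qed

end

lemma finite_QM: "finite (delta M) \<Longrightarrow> finite (QM M)"
  by (simp add: QM_def)
lemma finite_SM: "finite (delta M) \<Longrightarrow> finite (SM M)"
  by (simp add: SM_def)
lemma finite_simT: "finite (delta M) \<Longrightarrow> finite (simT M r)"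
  by (simp add: simT_def)
lemma finite_finT:
  assumes "finite (delta M)" "finite S" "finite T1" "finite T2"
  shows "finite (finT M S r T1 T2)"
proof -
  have "HP M S \<subseteq> QM M \<times> S" by (auto simp: HP_def)
  then have "finite (HP M S)" using finite_QM[OF assms(1)] assms(2) by (meson finite_SigmaI finite_subset)
  moreover have "\<And>qa. finite (Tq M T1 T2 (fst qa))" using assms(3,4) by (simp add: Tq_def)
  ultimately show ?thesis unfolding finT_def by (intro finite_imageI finite_SigmaI) auto
qed

lemma init_emb: "start_st M' = 3 * start_st M + r \<Longrightarrow> init_config M' x = emb r (init_config M x)"
  by (simp add: init_config_def emb_def)

lemma Inv_init: "SM M \<subseteq> S \<Longrightarrow> Inv M S (init_config M x)"
  unfolding Inv_def init_config_def QM_def SM_def by auto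

lemma poly_le1: "(k::nat) \<le> k' \<Longrightarrow> k * n ^ k \<le> k' * n ^ k'"
proof (cases "n = 0")
  case True
  assume "k \<le> k'"
  then show ?thesis using True by (cases k) auto
next
  case False
  assume "k \<le> k'"
  then have "n ^ k \<le> n ^ k'" using False by (simp add: power_increasing)
  then show ?thesis using \<open>k \<le> k'\<close> by (simp add: mult_le_mono)
qed

lemma poly_le: "(k::nat) + j \<le> k' \<Longrightarrow> k * n ^ k + k + j \<le> k' * n ^ k' + k'"
  using poly_le1[of k k' n] by simp

lemma bnd_init: "poly_time M \<Longrightarrow> \<exists>k. \<forall>x. bnd M (init_config M x) (k * length x ^ k + k)"
  unfolding poly_time_def bnd_def by blast

lemma paths_Pc: "paths M x = Pc M (init_config M x)"
  by (simp add: paths_def Pc_def)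

lemma card_paths: "card (paths M x) = SP M (init_config M x) (\<lambda>_. 1)"
  by (simp add: SP_def paths_Pc)

lemma card_filter_sum: "finite A \<Longrightarrow> card {x\<in>A. P x} = (\<Sum>x\<in>A. if P x then 1 else 0)"
  by (simp add: sum.inter_filter[symmetric])

lemma acc_SP: "finite (Pc M (init_config M x)) \<Longrightarrow>
   acc M x = SP M (init_config M x) (\<lambda>d. if fst d = accept_st M then 1 else 0)"
  unfolding acc_def SP_def paths_Pc by (rule card_filter_sum)

lemma rej_SP: "finite (Pc M (init_config M x)) \<Longrightarrow>
   rej M x = SP M (init_config M x) (\<lambda>d. if fst d \<noteq> accept_st M then 1 else 0)"
  unfolding rej_def SP_def paths_Pc by (rule card_filter_sum)

lemma SP_add: "SP M c (\<lambda>d. f d + g d) = SP M c f + SP M c g"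
  by (simp add: SP_def sum.distrib)


definition mA :: "nptm \<Rightarrow> nat set \<Rightarrow> nat set \<Rightarrow> nptm" where
  "mA M T1 T2 = \<lparr>delta = simT M 1 \<union> finT M (SM M) 1 T1 T2, start_st = 3 * start_st M + 1,
     accept_st = 0, reject_st = 3\<rparr>"

lemma mA_part:
  assumes "finite (delta M)" "T1 \<noteq> {}" "T2 \<noteq> {}" "T1 \<union> T2 \<subseteq> {0,3}"
  shows "part (mA M T1 T2) M (SM M) 1 T1 T2 {}"
proof
  have "finite T1" "finite T2" using assms(4) finite_subset by auto
  then show "finite (delta (mA M T1 T2))"
    using assms(1) by (simp add: mA_def finite_simT finite_finT finite_SM)
qed (use assms in \<open>auto simp: mA_def\<close>)

lemma mA_props:
  assumes M: "is_NPTM M" and T: "T1 \<noteq> {}" "T2 \<noteq> {}" "T1 \<union> T2 \<subseteq> {0,3}"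
  shows "is_NPTM (mA M T1 T2)"
    "\<And>x. card (paths (mA M T1 T2) x) = SP M (init_config M x) (\<lambda>d. card (Tq M T1 T2 (fst d)))"
proof -
  have fM: "finite (delta M)" using M by (simp add: is_NPTM_def)
  interpret p: part "mA M T1 T2" M "SM M" 1 T1 T2 "{}" using mA_part[OF fM T] .
  obtain k where k: "\<And>x. bnd M (init_config M x) (k * length x ^ k + k)"
    using bnd_init M unfolding is_NPTM_def by blast
  have ie: "\<And>x. init_config (mA M T1 T2) x = emb 1 (init_config M x)"
    by (rule init_emb) (simp add: mA_def)
  have iv: "\<And>x. Inv M (SM M) (init_config M x)" by (rule Inv_init) simp
  show "\<And>x. card (paths (mA M T1 T2) x) = SP M (init_config M x) (\<lambda>d. card (Tq M T1 T2 (fst d)))"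
    unfolding card_paths ie p.SP_main[OF iv k] by simp
  have "poly_time (mA M T1 T2)" unfolding poly_time_def
  proof (intro exI[of _ "k+1"] allI impI)
    fix x ts assume "valid_seq (mA M T1 T2) (init_config (mA M T1 T2) x) ts"
    then have "length ts \<le> Suc (k * length x ^ k + k)"
      using p.bnd_sim[OF iv k] unfolding ie bnd_def by blast
    also have "\<dots> \<le> (k+1) * length x ^ (k+1) + (k+1)" using poly_le[of k 1 "k+1"] by simp
    finally show "length ts \<le> (k+1) * length x ^ (k+1) + (k+1)" .
  qed
  then show "is_NPTM (mA M T1 T2)" using p.fin(2) by (simp add: is_NPTM_def mA_def)
qed

lemma GapP_sub: "GapP \<subseteq> Gap_totP"
proof
  fix f assume "f \<in> GapP"
  then obtain M where M: "is_NPTM M" and f: "f = (\<lambda>x. int (acc M x) - int (rej M x))"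
    by (auto simp: GapP_def)
  define A where "A = mA M {0,3} {0}"
  define B where "B = mA M {0} {0,3}"
  have A: "is_NPTM A" and cA: "\<And>x. card (paths A x) = SP M (init_config M x) (\<lambda>d. card (Tq M {0,3} {0} (fst d)))"
    unfolding A_def using mA_props[OF M] by auto
  have B: "is_NPTM B" and cB: "\<And>x. card (paths B x) = SP M (init_config M x) (\<lambda>d. card (Tq M {0} {0,3} (fst d)))"
    unfolding B_def using mA_props[OF M] by auto
  have fM: "finite (delta M)" using M by (simp add: is_NPTM_def)
  obtain k where k: "\<And>x. bnd M (init_config M x) (k * length x ^ k + k)"
    using bnd_init M unfolding is_NPTM_def by blast
  have eq: "f x = int (tot A x) - int (tot B x)" for x
  proof -
    let ?c = "init_config M x"
    let ?ia = "\<lambda>d::config. if fst d = accept_st M then 1 else (0::nat)"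
    let ?ir = "\<lambda>d::config. if fst d \<noteq> accept_st M then 1 else (0::nat)"
    have fin: "finite (Pc M ?c)" using finite_Pc[OF fM k] .
    have ne: "Pc M ?c \<noteq> {}" using Pc_nonempty[OF k] .
    have P1: "card (paths M x) \<ge> 1" using fin ne unfolding paths_Pc
      by (simp add: Suc_leI card_gt_0_iff)
    have a: "acc M x = SP M ?c ?ia" using acc_SP[OF fin] .
    have r: "rej M x = SP M ?c ?ir" using rej_SP[OF fin] .
    have "card (paths M x) = SP M ?c (\<lambda>d. ?ia d + ?ir d)" unfolding card_paths
      by (rule arg_cong[where f="SP M ?c"]) auto
    then have P: "card (paths M x) = acc M x + rej M x" unfolding SP_add a r .
    have "card (paths A x) = SP M ?c (\<lambda>d. 1 + ?ia d)" unfolding cA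
      by (rule arg_cong[where f="SP M ?c"]) (auto simp: Tq_def)
    then have PA: "card (paths A x) = card (paths M x) + acc M x" unfolding SP_add a card_paths .
    have "card (paths B x) = SP M ?c (\<lambda>d. 1 + ?ir d)" unfolding cB
      by (rule arg_cong[where f="SP M ?c"]) (auto simp: Tq_def)
    then have PB: "card (paths B x) = card (paths M x) + rej M x" unfolding SP_add r card_paths .
    show ?thesis using P P1 PA PB f by (simp add: tot_def)
  qed
  show "f \<in> Gap_totP" unfolding Gap_totP_def TotP_def
    using A B eq by blast
qed


definition SC :: "nptm \<Rightarrow> nptm \<Rightarrow> nat set" where
  "SC G H = SM G \<union> SM H"

definition startT :: "nptm \<Rightarrow> nptm \<Rightarrow> trans set" where
  "startT G H = (\<lambda>a. (0,a,3*start_st G+1,a,MStay)) ` SC G H \<union> (\<lambda>a. (0,a,3*start_st H+2,a,MStay)) ` SC G H"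

definition mC :: "nptm \<Rightarrow> nptm \<Rightarrow> nptm" where
  "mC G H = \<lparr>delta = startT G H \<union> simT G 1 \<union> finT G (SC G H) 1 {3} {3} \<union> simT H 2 \<union> finT H (SC G H) 2 {6} {6},
     start_st = 0, accept_st = 3, reject_st = 6\<rparr>"

lemma fst_simT: "t \<in> simT M r \<Longrightarrow> fst t mod 3 = r mod 3"
  by (auto simp: simT_def tau_def split: prod.splits)

lemma fst_finT: "t \<in> finT M S r T1 T2 \<Longrightarrow> fst t mod 3 = r mod 3"
  by (auto simp: finT_def mkf_def)

lemma fst_startT: "t \<in> startT G H \<Longrightarrow> fst t = 0"
  by (auto simp: startT_def)

lemma finite_mC: "finite (delta G) \<Longrightarrow> finite (delta H) \<Longrightarrow> finite (delta (mC G H))"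
  by (simp add: mC_def startT_def SC_def finite_simT finite_finT finite_SM)

lemma mC_partG: assumes "finite (delta G)" "finite (delta H)" shows
  "part (mC G H) G (SC G H) 1 {3} {3} (startT G H \<union> simT H 2 \<union> finT H (SC G H) 2 {6} {6})"
proof
  show "delta (mC G H) = startT G H \<union> simT H 2 \<union> finT H (SC G H) 2 {6} {6} \<union> simT G 1 \<union> finT G (SC G H) 1 {3} {3}"
    unfolding mC_def by (simp only: nptm.select_convs Un_ac)
  fix t assume "t \<in> startT G H \<union> simT H 2 \<union> finT H (SC G H) 2 {6} {6}"
  then have "fst t = 0 \<or> fst t mod 3 = 2 mod 3" using fst_simT[of t H 2] fst_finT[of t H "SC G H" 2] fst_startT[of t G H] by blast
  then show "fst t mod 3 \<noteq> 1" by auto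
qed (use assms finite_mC[OF assms] in \<open>simp_all add: mC_def SC_def\<close>)

lemma mC_partH: assumes "finite (delta G)" "finite (delta H)" shows
  "part (mC G H) H (SC G H) 2 {6} {6} (startT G H \<union> simT G 1 \<union> finT G (SC G H) 1 {3} {3})"
proof
  show "delta (mC G H) = startT G H \<union> simT G 1 \<union> finT G (SC G H) 1 {3} {3} \<union> simT H 2 \<union> finT H (SC G H) 2 {6} {6}"
    unfolding mC_def by (simp only: nptm.select_convs Un_ac)
  fix t assume "t \<in> startT G H \<union> simT G 1 \<union> finT G (SC G H) 1 {3} {3}"
  then have "fst t = 0 \<or> fst t mod 3 = 1 mod 3" using fst_simT[of t G 1] fst_finT[of t G "SC G H" 1] fst_startT[of t G H] by blast
  then show "fst t mod 3 \<noteq> 2" by auto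
qed (use assms finite_mC[OF assms] in \<open>simp_all add: mC_def SC_def\<close>)

definition tapeX :: "bool list \<Rightarrow> int \<Rightarrow> nat" where
  "tapeX x = (\<lambda>i. if 0 \<le> i \<and> nat i < length x then (if x ! nat i then 2 else 1) else 0)"

lemma init_tape: "init_config M x = (start_st M, tapeX x, 0)"
  by (simp add: init_config_def tapeX_def)

lemma tapeX_SM: "tapeX x i \<in> SM M"
  by (simp add: tapeX_def SM_def)

lemma card_paths_ge1:
  assumes "is_NPTM M" shows "card (paths M x) \<ge> 1"
proof -
  have fM: "finite (delta M)" using assms by (simp add: is_NPTM_def)
  obtain k where k: "\<And>x. bnd M (init_config M x) (k * length x ^ k + k)"
    using bnd_init assms unfolding is_NPTM_def by blast
  have fin: "finite (Pc M (init_config M x))" using finite_Pc[OF fM k] .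
  have ne: "Pc M (init_config M x) \<noteq> {}" using Pc_nonempty[OF k] .
  show ?thesis using fin ne unfolding paths_Pc by (simp add: Suc_leI card_gt_0_iff)
qed

lemma SP_zero: "SP M c (\<lambda>_. 0) = 0"
  by (simp add: SP_def)

lemma mC_props:
  assumes G: "is_NPTM G" and H: "is_NPTM H"
  shows "is_NPTM (mC G H)" "\<And>x. acc (mC G H) x = card (paths G x)" "\<And>x. rej (mC G H) x = card (paths H x)"
proof -
  have fG: "finite (delta G)" using G by (simp add: is_NPTM_def)
  have fH: "finite (delta H)" using H by (simp add: is_NPTM_def)
  interpret pG: part "mC G H" G "SC G H" 1 "{3}" "{3}" "startT G H \<union> simT H 2 \<union> finT H (SC G H) 2 {6} {6}"
    using mC_partG[OF fG fH] .
  interpret pH: part "mC G H" H "SC G H" 2 "{6}" "{6}" "startT G H \<union> simT G 1 \<union> finT G (SC G H) 1 {3} {3}"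
    using mC_partH[OF fG fH] .
  obtain kG where kG: "\<And>x. bnd G (init_config G x) (kG * length x ^ kG + kG)"
    using bnd_init G unfolding is_NPTM_def by blast
  obtain kH where kH: "\<And>x. bnd H (init_config H x) (kH * length x ^ kH + kH)"
    using bnd_init H unfolding is_NPTM_def by blast
  define C where "C = mC G H"
  have ivG: "\<And>x. Inv G (SC G H) (init_config G x)" by (rule Inv_init) (simp add: SC_def)
  have ivH: "\<And>x. Inv H (SC G H) (init_config H x)" by (rule Inv_init) (simp add: SC_def)
  have ic: "init_config C x = (0, tapeX x, 0)" for x by (simp add: init_tape C_def mC_def)
  define tG where "tG x = (0::nat, tapeX x 0, 3 * start_st G + 1, tapeX x 0, MStay)" for x
  define tH where "tH x = (0::nat, tapeX x 0, 3 * start_st H + 2, tapeX x 0, MStay)" for x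
  have aG: "apply_trans (tG x) (init_config C x) = emb 1 (init_config G x)" for x
    by (simp add: ic tG_def apply_simp emb_def init_tape)
  have aH: "apply_trans (tH x) (init_config C x) = emb 2 (init_config H x)" for x
    by (simp add: ic tH_def apply_simp emb_def init_tape)
  have neq: "tG x \<noteq> tH x" for x by (simp add: tG_def tH_def) presburger
  have appC: "app C (init_config C x) = {tG x, tH x}" for x
  proof (rule set_eqI, rule iffI)
    fix t assume "t \<in> app C (init_config C x)"
    then have at: "applicable C t (0, tapeX x, 0)" by (simp add: app_def ic)
    obtain q a q' b m where t: "t = (q,a,q',b,m)" by (cases t) auto
    have td: "t \<in> delta C" and q: "q = 0" and a: "a = tapeX x 0" using at by (auto simp: t applicable_simp)
    have "t \<notin> simT G 1 \<union> finT G (SC G H) 1 {3} {3} \<union> simT H 2 \<union> finT H (SC G H) 2 {6} {6}"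
    proof
      assume "t \<in> simT G 1 \<union> finT G (SC G H) 1 {3} {3} \<union> simT H 2 \<union> finT H (SC G H) 2 {6} {6}"
      then have "fst t mod 3 = 1 mod 3 \<or> fst t mod 3 = 2 mod 3"
        using fst_simT[of t G 1] fst_finT[of t G "SC G H" 1] fst_simT[of t H 2] fst_finT[of t H "SC G H" 2] by blast
      then show False using q t by simp
    qed
    then have "t \<in> startT G H" using td unfolding C_def mC_def by auto
    then show "t \<in> {tG x, tH x}" using t q a by (auto simp: startT_def tG_def tH_def)
  next
    fix t assume "t \<in> {tG x, tH x}"
    moreover have "tapeX x 0 \<in> SC G H" using tapeX_SM by (simp add: SC_def)
    ultimately have "t \<in> startT G H" by (auto simp: startT_def tG_def tH_def)
    then have "t \<in> delta C" unfolding C_def mC_def by simp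
    moreover have "accept_st C = 3" "reject_st C = 6" by (simp_all add: C_def mC_def)
    ultimately show "t \<in> app C (init_config C x)" using \<open>t \<in> {tG x, tH x}\<close>
      unfolding app_def ic by (auto simp: tG_def tH_def applicable_simp)
  qed
  define bC where "bC (x::bool list) = Suc (Suc (max (kG * length x ^ kG + kG) (kH * length x ^ kH + kH)))" for x
  have bndC: "bnd C (init_config C x) (bC x)" for x
    unfolding bnd_def
  proof (intro allI impI)
    fix ts assume v: "valid_seq C (init_config C x) ts"
    show "length ts \<le> bC x"
    proof (cases ts)
      case Nil then show ?thesis by simp
    next
      case (Cons t ts')
      have "t \<in> app C (init_config C x)" and v': "valid_seq C (apply_trans t (init_config C x)) ts'"
        using v[unfolded Cons] unfolding valid_seq.simps app_def mem_Collect_eq by blast+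
      then have "t = tG x \<or> t = tH x" using appC by blast
      then show ?thesis
      proof
        assume "t = tG x"
        then have "valid_seq (mC G H) (emb 1 (init_config G x)) ts'" using v' aG C_def by simp
        then have "length ts' \<le> Suc (kG * length x ^ kG + kG)" using pG.bnd_sim[OF ivG kG] unfolding bnd_def by blast
        then show ?thesis using Cons by (simp add: bC_def)
      next
        assume "t = tH x"
        then have "valid_seq (mC G H) (emb 2 (init_config H x)) ts'" using v' aH C_def by simp
        then have "length ts' \<le> Suc (kH * length x ^ kH + kH)" using pH.bnd_sim[OF ivH kH] unfolding bnd_def by blast
        then show ?thesis using Cons by (simp add: bC_def)
      qed
    qed
  qed
  have nh: "\<not> halted C (init_config C x)" for x
    using appC[of x] unfolding halted_def app_def by blast
  have fC: "finite (delta C)" unfolding C_def by (rule finite_mC[OF fG fH])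
  have SPC: "SP C (init_config C x) f =
     SP G (init_config G x) (\<lambda>d. f (3, snd d)) + SP H (init_config H x) (\<lambda>d. f (6, snd d))" for x f
  proof -
    have "SP C (init_config C x) f = (\<Sum>t\<in>{tG x, tH x}. SP C (apply_trans t (init_config C x)) f)"
      using SP_rec[OF fC bndC nh] appC by simp
    also have "\<dots> = SP C (emb 1 (init_config G x)) f + SP C (emb 2 (init_config H x)) f"
      using neq aG aH by simp
    also have "\<dots> = SP G (init_config G x) (\<lambda>d. f (3, snd d)) + SP H (init_config H x) (\<lambda>d. f (6, snd d))"
      unfolding C_def pG.SP_main[OF ivG kG] pH.SP_main[OF ivH kH] by (simp add: Tq_def)
    finally show ?thesis .
  qed
  have finPC: "finite (Pc C (init_config C x))" for x using finite_Pc[OF fC bndC] .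
  show "acc (mC G H) x = card (paths G x)" for x
    using acc_SP[OF finPC, of x] SPC[of x] card_paths[of G x] SP_zero
    by (simp add: C_def mC_def)
  show "rej (mC G H) x = card (paths H x)" for x
    using rej_SP[OF finPC, of x] SPC[of x] card_paths[of H x] SP_zero
    by (simp add: C_def mC_def)
  have "poly_time C" unfolding poly_time_def
  proof (intro exI[of _ "kG + kH + 2"] allI impI)
    fix x ts assume "valid_seq C (init_config C x) ts"
    then have "length ts \<le> bC x" using bndC unfolding bnd_def by blast
    also have "\<dots> \<le> (kG + kH + 2) * length x ^ (kG + kH + 2) + (kG + kH + 2)"
      using poly_le[of kG 2 "kG + kH + 2" "length x"] poly_le[of kH 2 "kG + kH + 2" "length x"]
      by (simp add: bC_def)
    finally show "length ts \<le> (kG + kH + 2) * length x ^ (kG + kH + 2) + (kG + kH + 2)" .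
  qed
  then show "is_NPTM (mC G H)" using fC unfolding C_def by (simp add: is_NPTM_def mC_def)
qed

lemma Gap_sub: "Gap_totP \<subseteq> GapP"
proof
  fix f assume "f \<in> Gap_totP"
  then obtain G H where G: "is_NPTM G" and H: "is_NPTM H" and f: "f = (\<lambda>x. int (tot G x) - int (tot H x))"
    unfolding Gap_totP_def TotP_def by blast
  have "f x = int (acc (mC G H) x) - int (rej (mC G H) x)" for x
    using mC_props(2,3)[OF G H, of x] card_paths_ge1[OF G, of x] card_paths_ge1[OF H, of x]
    by (simp add: f tot_def of_nat_diff)
  then have "f = (\<lambda>x. int (acc (mC G H) x) - int (rej (mC G H) x))" by blast
  then show "f \<in> GapP" unfolding GapP_def using mC_props(1)[OF G H] by blast
qed


theorem proposition4:
  shows "Gap_totP = GapP"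
  using Gap_sub GapP_sub by (rule subset_antisym)

end
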